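(* Let $\alpha>1$ and let $u_0:[0,\infty)\to[0,\infty)$ be of class $C^1$ and non-decreasing, with $m_0(\rho)=\int_0^\rho u_0(\sigma)\,d\sigma$. For $t\ge 0$ define $P_t(\rho_0)=\rho_0+\alpha\, m_0(\rho_0)\,u_0(\rho_0)^{\alpha-1}\,t$. Then for every $t\ge0$ the map $P_t:[0,\infty)\to[0,\infty)$ is a bijection with $\frac{dP_t}{d\rho_0}\ge 1$, and the function $$u(t,\rho)=\begin{cases}\big(u_0(P_t^{-1}(\rho))^{-\alpha}+\alpha t\big)^{-1/\alpha}, & u_0(P_t^{-1}(\rho))\neq 0,\\ 0,& u_0(P_t^{-1}(\rho))=0,\end{cases}$$ is continuous and $C^1$, and $m(t,\rho)=\int_0^\rho u(t,\sigma)\,d\sigma$ is a global classical ($C^1$) solution of the mass equation $m_t+m\,(m_\rho)^\alpha=0$ on $(0,\infty)\times(0,\infty)$ with $m(0,\cdot)=m_0$ and $m(t,0)=0$.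
   Context: Radially symmetric densities $u(t,x)\ge0$ on $\mathbb R^d$ are written as functions of a volume variable $\rho\ge0$ (proportional to $|x|^d$), and the mass function is $m(t,\rho)=\int_0^\rho u(t,\sigma)\,d\sigma$, so $u=m_\rho$. The "mass equation" associated with $u_t=\nabla\cdot(u^\alpha\nabla v)$, $-\Delta v=u$, is $m_t+m\,(m_\rho)^\alpha=0$. A classical solution is a $C^1$ function satisfying this equation pointwise. *)

theory Defs
  imports "HOL-Analysis.Analysis"
begin

definition mass0 :: "(real \<Rightarrow> real) \<Rightarrow> real \<Rightarrow> real" where
  "mass0 u0 \<rho> = integral {0..\<rho>} u0"

definition Pmap :: "real \<Rightarrow> (real \<Rightarrow> real) \<Rightarrow> real \<Rightarrow> real \<Rightarrow> real" where
  "Pmap \<alpha> u0 t \<rho>0 = \<rho>0 + \<alpha> * mass0 u0 \<rho>0 * (u0 \<rho>0) powr (\<alpha> - 1) * t"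

definition usol :: "real \<Rightarrow> (real \<Rightarrow> real) \<Rightarrow> real \<Rightarrow> real \<Rightarrow> real" where
  "usol \<alpha> u0 t \<rho> =
     (let r = u0 (the_inv_into {0..} (Pmap \<alpha> u0 t) \<rho>)
      in if r \<noteq> 0 then (r powr (- \<alpha>) + \<alpha> * t) powr (- 1 / \<alpha>) else 0)"

definition msol :: "real \<Rightarrow> (real \<Rightarrow> real) \<Rightarrow> real \<times> real \<Rightarrow> real" where
  "msol \<alpha> u0 z = integral {0..snd z} (usol \<alpha> u0 (fst z))"

definition C1_on :: "(real \<times> real) set \<Rightarrow> (real \<times> real \<Rightarrow> real) \<Rightarrow> bool" where
  "C1_on S f \<longleftrightarrow> (\<exists>ft fr. continuous_on S ft \<and> continuous_on S fr \<and>
     (\<forall>z\<in>S. (f has_derivative (\<lambda>(h, k). h * ft z + k * fr z)) (at z within S)))"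

definition classical_mass_solution :: "real \<Rightarrow> (real \<times> real) set \<Rightarrow> (real \<times> real \<Rightarrow> real) \<Rightarrow> bool" where
  "classical_mass_solution \<alpha> S m \<longleftrightarrow> (\<exists>mt mr. continuous_on S mt \<and> continuous_on S mr \<and>
     (\<forall>z\<in>S. (m has_derivative (\<lambda>(h, k). h * mt z + k * mr z)) (at z) \<and>
            mt z + m z * (mr z) powr \<alpha> = 0))"

end

theory Submission
  imports Defs
begin

lemma deriv_mult_zero:
  fixes f g :: "real \<Rightarrow> real"
  assumes f: "(f has_field_derivative f') (at x within S)" and fx: "f x = 0"
    and g: "continuous (at x within S) g"
  shows "((\<lambda>y. f y * g y) has_field_derivative f' * g x) (at x within S)"
proof -
  have "((\<lambda>y. (f y - f x) / (y - x)) \<longlongrightarrow> f') (at x within S)"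
    using f by (simp add: has_field_derivative_iff)
  moreover have "(g \<longlongrightarrow> g x) (at x within S)" using g by (simp add: continuous_within)
  ultimately have "((\<lambda>y. (f y - f x) / (y - x) * g y) \<longlongrightarrow> f' * g x) (at x within S)"
    by (rule tendsto_mult)
  then show ?thesis using fx by (simp add: has_field_derivative_iff)
qed

lemma deriv_nonneg_mono:
  fixes f :: "real \<Rightarrow> real"
  assumes f: "(f has_field_derivative D) (at x within {0..})" and x: "x \<ge> 0"
    and m: "mono_on {0..} f"
  shows "D \<ge> 0"
proof -
  have "((\<lambda>y. (f y - f x) / (y - x)) \<longlongrightarrow> D) (at x within {0..})"
    using f by (simp add: has_field_derivative_iff)
  hence "((\<lambda>y. (f y - f x) / (y - x)) \<longlongrightarrow> D) (at x within {x<..})"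
    by (rule tendsto_within_subset) (use x in auto)
  moreover have "eventually (\<lambda>y. (f y - f x) / (y - x) \<ge> 0) (at x within {x<..})"
    unfolding eventually_at_filter
    using m x by (auto intro!: always_eventually divide_nonneg_pos simp: mono_on_def)
  ultimately show ?thesis
    by (intro tendsto_lowerbound) auto
qed



locale msetup =
  fixes \<alpha> :: real and u0 u0' :: "real \<Rightarrow> real"
  assumes alpha: "\<alpha> > 1"
    and cont': "continuous_on {0..} u0'"
    and der: "\<And>x. x \<ge> 0 \<Longrightarrow> (u0 has_real_derivative u0' x) (at x within {0..})"
    and nonneg: "\<And>x. x \<ge> 0 \<Longrightarrow> u0 x \<ge> 0"
    and mono: "mono_on {0..} u0"
begin

lemma u0_cont: "continuous_on {0..} u0"
  unfolding continuous_on_eq_continuous_within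
  using der DERIV_continuous by blast

lemma u0'_nonneg: "x \<ge> 0 \<Longrightarrow> u0' x \<ge> 0"
  using deriv_nonneg_mono[of u0 "u0' x" x] der mono by blast

lemma u0_mono: "0 \<le> x \<Longrightarrow> x \<le> y \<Longrightarrow> u0 x \<le> u0 y"
  using mono by (auto simp: mono_on_def)

lemma u0_zero_below: "u0 x = 0 \<Longrightarrow> 0 \<le> y \<Longrightarrow> y \<le> x \<Longrightarrow> u0 y = 0"
  using u0_mono[of y x] nonneg[of y] by auto

lemma u0_int: "u0 integrable_on {a..b}" if "a \<ge> 0"
  by (rule integrable_continuous_interval) (rule continuous_on_subset[OF u0_cont], use that in auto)

abbreviation m0 where "m0 \<equiv> mass0 u0"

lemma m0_deriv: "x \<ge> 0 \<Longrightarrow> (m0 has_real_derivative u0 x) (at x within {0..})"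
proof -
  assume x: "x \<ge> 0"
  have c: "continuous_on {0..x+1} u0" by (rule continuous_on_subset[OF u0_cont]) auto
  have "((\<lambda>u. integral {0..u} u0) has_vector_derivative u0 x) (at x within {0..x+1})"
    by (rule integral_has_vector_derivative[OF c]) (use x in auto)
  moreover have "at x within {0..x+1} = at x within {0..}"
    by (rule at_within_nhd[of _ "{..<x+1}"]) auto
  ultimately show ?thesis
    by (simp add: has_real_derivative_iff_has_vector_derivative mass0_def[abs_def])
qed

lemma m0_cont: "continuous_on {0..} m0"
  unfolding continuous_on_eq_continuous_within
  using m0_deriv DERIV_continuous by blast

lemma m0_0: "m0 0 = 0" by (simp add: mass0_def)

lemma m0_nonneg: "x \<ge> 0 \<Longrightarrow> m0 x \<ge> 0"
  unfolding mass0_def by (rule integral_nonneg[OF u0_int]) (auto intro: nonneg)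

lemma m0_mono: "0 \<le> x \<Longrightarrow> x \<le> y \<Longrightarrow> m0 x \<le> m0 y"
  unfolding mass0_def by (rule integral_subset_le) (auto intro: nonneg u0_int)

lemma m0_bound: assumes "u0 x = 0" "0 \<le> x" "0 \<le> y" shows "m0 y \<le> \<bar>y - x\<bar> * u0 y"
proof (cases "y \<le> x")
  case True
  have "m0 y = integral {0..y} (\<lambda>_. 0::real)"
    unfolding mass0_def by (rule integral_cong) (use assms True u0_zero_below in auto)
  then show ?thesis using assms nonneg[of y] by simp
next
  case False
  have "m0 y = integral {0..x} u0 + integral {x..y} u0"
    unfolding mass0_def
    by (rule Henstock_Kurzweil_Integration.integral_combine[symmetric]) (use assms False u0_int in auto)
  also have "integral {0..x} u0 = integral {0..x} (\<lambda>_. 0::real)"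
    by (rule integral_cong) (use assms u0_zero_below in auto)
  also have "integral {x..y} u0 \<le> integral {x..y} (\<lambda>_. u0 y)"
    by (rule integral_le) (use assms False u0_int u0_mono in auto)
  finally show ?thesis using False by simp
qed

end


lemma powr_mult_self: "(s::real) \<ge> 0 \<Longrightarrow> s * s powr b = s powr (b + 1)"
  by (cases "s = 0") (auto simp: powr_add)

context msetup begin

lemma upow_cont: "c > 0 \<Longrightarrow> continuous_on {0..} (\<lambda>y. u0 y powr c)"
  by (rule continuous_on_powr'[OF u0_cont continuous_on_const]) (use nonneg in auto)

lemma m0_zero: "u0 x = 0 \<Longrightarrow> 0 \<le> x \<Longrightarrow> m0 x = 0"
  using m0_bound[of x x] m0_nonneg[of x] by auto

definition "phi x = \<alpha> * m0 x * u0 x powr (\<alpha> - 1)"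
definition "phi' x = \<alpha> * (u0 x powr \<alpha> + (\<alpha> - 1) * m0 x * u0 x powr (\<alpha> - 2) * u0' x)"
definition "psi x = u0 x powr \<alpha>"
definition "psi' x = \<alpha> * u0 x powr (\<alpha> - 1) * u0' x"

lemma phi_deriv: assumes x: "x \<ge> 0" shows "(phi has_real_derivative phi' x) (at x within {0..})"
proof (cases "u0 x = 0")
  case True
  have c: "continuous (at x within {0..}) (\<lambda>y. u0 y powr (\<alpha> - 1))"
    using upow_cont[of "\<alpha> - 1"] alpha x by (simp add: continuous_on_eq_continuous_within)
  have "((\<lambda>y. \<alpha> * m0 y) has_real_derivative \<alpha> * u0 x) (at x within {0..})"
    by (rule DERIV_cmult[OF m0_deriv[OF x]])
  from deriv_mult_zero[OF this _ c] True m0_zero[OF True x]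
  show ?thesis by (simp add: phi_def[abs_def] phi'_def)
next
  case False
  hence pos: "u0 x > 0" using nonneg[OF x] by simp
  have d1: "((\<lambda>y. u0 y powr (\<alpha> - 1)) has_real_derivative ((\<alpha> - 1) * u0 x powr (\<alpha> - 1 - 1)) * u0' x) (at x within {0..})"
    by (rule DERIV_chain2[OF has_real_derivative_powr[OF pos] der[OF x]])
  have "((\<lambda>y. \<alpha> * m0 y * u0 y powr (\<alpha> - 1)) has_real_derivative
      \<alpha> * u0 x * u0 x powr (\<alpha> - 1) + ((\<alpha> - 1) * u0 x powr (\<alpha> - 1 - 1)) * u0' x * (\<alpha> * m0 x)) (at x within {0..})"
    by (rule DERIV_mult[OF DERIV_cmult[OF m0_deriv[OF x]] d1])
  moreover have eq: "u0 x * u0 x powr (\<alpha> - 1) = u0 x powr \<alpha>"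
    using powr_mult_self[of "u0 x" "\<alpha> - 1"] pos by simp
  moreover have eq2: "\<alpha> - 1 - 1 = \<alpha> - 2" by simp
  ultimately show ?thesis unfolding phi_def[abs_def] phi'_def
    by (metis (no_types, lifting) DERIV_cong distrib_left mult.assoc mult.commute)
qed

lemma psi_deriv: assumes x: "x \<ge> 0" shows "(psi has_real_derivative psi' x) (at x within {0..})"
proof (cases "u0 x = 0")
  case True
  have c: "continuous (at x within {0..}) (\<lambda>y. u0 y powr (\<alpha> - 1))"
    using upow_cont[of "\<alpha> - 1"] alpha x by (simp add: continuous_on_eq_continuous_within)
  have e: "u0 y * u0 y powr (\<alpha> - 1) = psi y" if "y \<in> {0..}" for y
    using powr_mult_self[of "u0 y" "\<alpha> - 1"] nonneg that by (simp add: psi_def)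
  from deriv_mult_zero[OF der[OF x] True c] True
  have "((\<lambda>y. u0 y * u0 y powr (\<alpha> - 1)) has_real_derivative 0) (at x within {0..})" by simp
  from has_field_derivative_transform_within[OF this zero_less_one, of psi] e x
  show ?thesis by (simp add: psi'_def True)
next
  case False
  hence pos: "u0 x > 0" using nonneg[OF x] by simp
  show ?thesis unfolding psi_def[abs_def] psi'_def
    by (rule DERIV_cong[OF DERIV_chain2[OF has_real_derivative_powr[OF pos] der[OF x]]]) simp
qed

end


context msetup begin

lemma phi_cont: "continuous_on {0..} phi"
  unfolding continuous_on_eq_continuous_within
  using phi_deriv DERIV_continuous by blast

lemma psi_cont: "continuous_on {0..} psi"
  unfolding continuous_on_eq_continuous_within
  using psi_deriv DERIV_continuous by blast

lemma psi'_cont: "continuous_on {0..} psi'"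
  unfolding psi'_def[abs_def] using alpha
  by (intro continuous_on_mult[OF continuous_on_mult[OF continuous_on_const upow_cont] cont']) auto

lemma T_cont: "continuous_on {0..} (\<lambda>y. m0 y * u0 y powr (\<alpha> - 2) * u0' y)"
  unfolding continuous_on_def
proof
  fix x :: real assume x: "x \<in> {0..}"
  let ?F = "at x within {0..}"
  have u0t: "(u0 \<longlongrightarrow> u0 x) ?F" using u0_cont x by (simp add: continuous_on_def)
  have m0t: "(m0 \<longlongrightarrow> m0 x) ?F" using m0_cont x by (simp add: continuous_on_def)
  have u0't: "(u0' \<longlongrightarrow> u0' x) ?F" using cont' x by (simp add: continuous_on_def)
  show "((\<lambda>y. m0 y * u0 y powr (\<alpha> - 2) * u0' y) \<longlongrightarrow> m0 x * u0 x powr (\<alpha> - 2) * u0' x) ?F"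
  proof (cases "u0 x = 0")
    case False
    show ?thesis
      by (intro tendsto_mult m0t u0't tendsto_powr[OF u0t tendsto_const False])
  next
    case True
    have "((\<lambda>y. u0 y powr (\<alpha> - 1)) \<longlongrightarrow> u0 x powr (\<alpha> - 1)) ?F"
      using upow_cont[of "\<alpha> - 1"] alpha x by (simp add: continuous_on_def)
    hence p1: "((\<lambda>y. u0 y powr (\<alpha> - 1)) \<longlongrightarrow> 0) ?F" using True by simp
    have "((\<lambda>y. \<bar>y - x\<bar> * u0 y powr (\<alpha> - 1) * u0' y) \<longlongrightarrow> \<bar>x - x\<bar> * 0 * u0' x) ?F"
      by (intro tendsto_mult p1 u0't tendsto_rabs tendsto_diff tendsto_ident_at tendsto_const)
    hence r: "((\<lambda>y. \<bar>y - x\<bar> * u0 y powr (\<alpha> - 1) * u0' y) \<longlongrightarrow> 0) ?F" by simp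
    have ev: "eventually (\<lambda>y. norm (m0 y * u0 y powr (\<alpha> - 2) * u0' y) \<le> \<bar>y - x\<bar> * u0 y powr (\<alpha> - 1) * u0' y) ?F"
      unfolding eventually_at_filter
    proof (intro always_eventually allI impI)
      fix y :: real assume y: "y \<in> {0..}"
      have a: "m0 y \<ge> 0" "u0' y \<ge> 0" "u0 y \<ge> 0" using y m0_nonneg u0'_nonneg nonneg by auto
      have b: "m0 y \<le> \<bar>y - x\<bar> * u0 y" using m0_bound[OF True] x y by auto
      have "m0 y * u0 y powr (\<alpha> - 2) \<le> \<bar>y - x\<bar> * u0 y powr (\<alpha> - 1)"
      proof -
        have "m0 y * u0 y powr (\<alpha> - 2) \<le> (\<bar>y - x\<bar> * u0 y) * u0 y powr (\<alpha> - 2)"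
          by (rule mult_right_mono[OF b]) simp
        also have "\<dots> = \<bar>y - x\<bar> * u0 y powr (\<alpha> - 1)"
          using powr_mult_self[OF a(3), of "\<alpha> - 2"] by (simp add: algebra_simps)
        finally show ?thesis .
      qed
      then show "norm (m0 y * u0 y powr (\<alpha> - 2) * u0' y) \<le> \<bar>y - x\<bar> * u0 y powr (\<alpha> - 1) * u0' y"
        using a by (simp add: abs_mult mult_right_mono)
    qed
    have "((\<lambda>y. m0 y * u0 y powr (\<alpha> - 2) * u0' y) \<longlongrightarrow> 0) ?F"
      by (rule Lim_null_comparison[OF ev r])
    then show ?thesis using True by simp
  qed
qed

lemma phi'_cont: "continuous_on {0..} phi'"
proof -
  have "continuous_on {0..} (\<lambda>x. \<alpha> * (u0 x powr \<alpha> + (\<alpha> - 1) * (m0 x * u0 x powr (\<alpha> - 2) * u0' x)))"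
    using alpha
    by (intro continuous_on_mult[OF continuous_on_const continuous_on_add[OF upow_cont continuous_on_mult[OF continuous_on_const T_cont]]]) auto
  then show ?thesis by (simp add: phi'_def[abs_def] mult.assoc)
qed

lemma phi_nonneg: "x \<ge> 0 \<Longrightarrow> phi x \<ge> 0"
  using alpha m0_nonneg by (simp add: phi_def)

lemma phi_mono: "0 \<le> x \<Longrightarrow> x \<le> y \<Longrightarrow> phi x \<le> phi y"
  unfolding phi_def using alpha
  by (intro mult_mono mult_left_mono m0_mono powr_mono2 u0_mono)
     (auto intro!: nonneg m0_nonneg mult_nonneg_nonneg)

lemma phi'_nonneg: "x \<ge> 0 \<Longrightarrow> phi' x \<ge> 0"
  using alpha m0_nonneg u0'_nonneg by (simp add: phi'_def)

lemma psi_nonneg: "psi x \<ge> 0" by (simp add: psi_def)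

end


context msetup begin

lemma Pmap_eq: "Pmap \<alpha> u0 t x = x + t * phi x"
  by (simp add: Pmap_def phi_def)

lemma Pmap_strict: "t \<ge> 0 \<Longrightarrow> 0 \<le> x \<Longrightarrow> x < y \<Longrightarrow> Pmap \<alpha> u0 t x < Pmap \<alpha> u0 t y"
  unfolding Pmap_eq using phi_mono[of x y] mult_left_mono[of "phi x" "phi y" t] by auto

lemma Pmap_inj: "t \<ge> 0 \<Longrightarrow> inj_on (Pmap \<alpha> u0 t) {0..}"
  unfolding inj_on_def
  by (metis Pmap_strict atLeast_iff less_irrefl linorder_neqE_linordered_idom)

lemma Pmap_ge: "t \<ge> 0 \<Longrightarrow> 0 \<le> x \<Longrightarrow> Pmap \<alpha> u0 t x \<ge> x"
  unfolding Pmap_eq using phi_nonneg[of x] by simp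

lemma Pmap_cont: "continuous_on {0..} (Pmap \<alpha> u0 t)"
  unfolding Pmap_eq[abs_def] using phi_cont by (intro continuous_intros) auto

lemma Pmap_0: "Pmap \<alpha> u0 t 0 = 0"
  by (simp add: Pmap_def m0_0)

lemma Pmap_bij: assumes t: "t \<ge> 0" shows "bij_betw (Pmap \<alpha> u0 t) {0..} {0..}"
  unfolding bij_betw_def
proof (intro conjI equalityI subsetI)
  show "inj_on (Pmap \<alpha> u0 t) {0..}" by (rule Pmap_inj[OF t])
  fix y assume "y \<in> Pmap \<alpha> u0 t ` {0..}"
  then show "y \<in> {0..}" using Pmap_ge[OF t] by force
next
  fix y :: real assume y: "y \<in> {0..}"
  have "\<exists>x\<ge>0. x \<le> y \<and> Pmap \<alpha> u0 t x = y"
    by (rule IVT') (use y Pmap_0 Pmap_ge[OF t, of y] continuous_on_subset[OF Pmap_cont] in auto)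
  then show "y \<in> Pmap \<alpha> u0 t ` {0..}" by force
qed

lemma Pmap_deriv: "t \<ge> 0 \<Longrightarrow> x \<ge> 0 \<Longrightarrow>
  (Pmap \<alpha> u0 t has_real_derivative 1 + t * phi' x) (at x within {0..})"
  unfolding Pmap_eq[abs_def]
  by (intro derivative_eq_intros) (auto intro: phi_deriv)

definition "Q z = the_inv_into {0..} (Pmap \<alpha> u0 (fst z)) (snd z)"

lemma Q_props: assumes "t \<ge> 0" "\<rho> \<ge> 0"
  shows "Q (t, \<rho>) \<ge> 0" "Pmap \<alpha> u0 t (Q (t, \<rho>)) = \<rho>"
proof -
  have b: "bij_betw (Pmap \<alpha> u0 t) {0..} {0..}" by (rule Pmap_bij[OF assms(1)])
  have r: "\<rho> \<in> Pmap \<alpha> u0 t ` {0..}" using b assms by (simp add: bij_betw_def)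
  show "Q (t, \<rho>) \<ge> 0"
    using the_inv_into_into[OF bij_betw_imp_inj_on[OF b] r, of "{0..}"] by (simp add: Q_def)
  show "Pmap \<alpha> u0 t (Q (t, \<rho>)) = \<rho>"
    using f_the_inv_into_f[OF bij_betw_imp_inj_on[OF b] r] by (simp add: Q_def)
qed

lemma Q_Pmap: "t \<ge> 0 \<Longrightarrow> x \<ge> 0 \<Longrightarrow> Q (t, Pmap \<alpha> u0 t x) = x"
  unfolding Q_def using the_inv_into_f_f[OF Pmap_inj] by auto

lemma Q_le: assumes "t \<ge> 0" "\<rho> \<ge> 0" shows "Q (t, \<rho>) \<le> \<rho>"
  using Pmap_ge[OF assms(1) Q_props(1)[OF assms]] Q_props(2)[OF assms] by simp

lemma Q_t0: "\<rho> \<ge> 0 \<Longrightarrow> Q (0, \<rho>) = \<rho>"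
  using Q_Pmap[of 0 \<rho>] by (simp add: Pmap_eq)

lemma Q_r0: "t \<ge> 0 \<Longrightarrow> Q (t, 0) = 0"
  using Q_Pmap[of t 0] by (simp add: Pmap_0)

lemma Q_pos: assumes "t \<ge> 0" "\<rho> > 0" shows "Q (t, \<rho>) > 0"
proof -
  have "Q (t, \<rho>) \<noteq> 0" using Q_props(2)[of t \<rho>] assms Pmap_0 by force
  then show ?thesis using Q_props(1)[of t \<rho>] assms by simp
qed

lemma Q_lip: assumes "t \<ge> 0" "\<rho> \<ge> 0" "t' \<ge> 0" "\<rho>' \<ge> 0"
  shows "\<bar>Q (t', \<rho>') - Q (t, \<rho>)\<bar> \<le> \<bar>\<rho>' - \<rho>\<bar> + \<bar>t' - t\<bar> * phi \<rho>'"
proof -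
  define x where "x = Q (t, \<rho>)"
  define x' where "x' = Q (t', \<rho>')"
  have x: "x \<ge> 0" "x + t * phi x = \<rho>" using Q_props[OF assms(1,2)] by (auto simp: x_def Pmap_eq)
  have x': "x' \<ge> 0" "x' + t' * phi x' = \<rho>'" "x' \<le> \<rho>'"
    using Q_props[OF assms(3,4)] Q_le[OF assms(3,4)] by (auto simp: x'_def Pmap_eq)
  have same: "\<bar>x' - x\<bar> \<le> \<bar>(x' - x) + t * (phi x' - phi x)\<bar>"
  proof (cases "x \<le> x'")
    case True
    then have "t * (phi x' - phi x) \<ge> 0" using phi_mono[OF x(1) True] assms by simp
    then show ?thesis using True by linarith
  next
    case False
    then have "t * (phi x' - phi x) \<le> 0" using phi_mono[OF x'(1), of x] assms
      by (simp add: mult_nonneg_nonpos)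
    then show ?thesis using False by linarith
  qed
  also have "(x' - x) + t * (phi x' - phi x) = (\<rho>' - \<rho>) - (t' - t) * phi x'"
    using x x' by (simp add: algebra_simps)
  also have "\<bar>\<dots>\<bar> \<le> \<bar>\<rho>' - \<rho>\<bar> + \<bar>t' - t\<bar> * phi x'"
    using phi_nonneg[OF x'(1)] abs_triangle_ineq4[of "\<rho>' - \<rho>" "(t' - t) * phi x'"]
    by (simp add: abs_mult)
  also have "\<dots> \<le> \<bar>\<rho>' - \<rho>\<bar> + \<bar>t' - t\<bar> * phi \<rho>'"
    using phi_mono[OF x'(1) x'(3)] by (simp add: mult_left_mono)
  finally show ?thesis by (simp add: x_def x'_def)
qed

lemma Q_cont: "continuous_on ({0..} \<times> {0..}) Q"
  unfolding continuous_on_def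
proof
  fix z assume z: "z \<in> ({0::real..} \<times> {0::real..})"
  let ?S = "{0::real..} \<times> {0::real..}"
  let ?F = "at z within ?S"
  have pc: "continuous_on ?S (\<lambda>w. phi (snd w))"
    by (rule continuous_on_compose2[OF phi_cont continuous_on_snd]) auto
  define R where "R = (\<lambda>w. \<bar>snd w - snd z\<bar> + \<bar>fst w - fst z\<bar> * phi (snd w))"
  have cR: "continuous_on ?S R" unfolding R_def
    by (intro continuous_intros pc)
  have "(R \<longlongrightarrow> R z) ?F"
    using bspec[OF cR[unfolded continuous_on_def] z] .
  moreover have "R z = 0" by (simp add: R_def)
  ultimately have "(R \<longlongrightarrow> 0) ?F" by simp
  hence lim: "((\<lambda>w. \<bar>snd w - snd z\<bar> + \<bar>fst w - fst z\<bar> * phi (snd w)) \<longlongrightarrow> 0) ?F"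
    by (simp add: R_def)
  have ev: "eventually (\<lambda>w. norm (Q w - Q z) \<le> \<bar>snd w - snd z\<bar> + \<bar>fst w - fst z\<bar> * phi (snd w)) ?F"
    unfolding eventually_at_filter
  proof (intro always_eventually allI impI)
    fix w assume "w \<in> ?S"
    then obtain a b where w: "w = (a, b)" "a \<ge> 0" "b \<ge> 0" by auto
    obtain c d where zz: "z = (c, d)" "c \<ge> 0" "d \<ge> 0" using z by auto
    show "norm (Q w - Q z) \<le> \<bar>snd w - snd z\<bar> + \<bar>fst w - fst z\<bar> * phi (snd w)"
      using Q_lip[of c d a b] w zz by simp
  qed
  have "((\<lambda>w. Q w - Q z) \<longlongrightarrow> 0) ?F"
    by (rule Lim_null_comparison[OF ev lim])
  hence "((\<lambda>w. Q w - Q z + Q z) \<longlongrightarrow> 0 + Q z) ?F" by (intro tendsto_add tendsto_const)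
  then show "(Q \<longlongrightarrow> Q z) ?F" by simp
qed

end


definition pd :: "(real \<times> real \<Rightarrow> real) \<Rightarrow> real \<Rightarrow> real \<Rightarrow> real \<times> real \<Rightarrow> bool" where
  "pd f a b z \<longleftrightarrow> (f has_derivative (\<lambda>w. fst w * a + snd w * b)) (at z)"

lemma pd_cong: "pd f a b z \<Longrightarrow> a = a' \<Longrightarrow> b = b' \<Longrightarrow> pd f a' b' z" by simp

lemma pd_fst: "pd fst 1 0 z"
  unfolding pd_def by (rule has_derivative_eq_rhs[OF has_derivative_fst[OF has_derivative_ident]]) auto

lemma pd_snd: "pd snd 0 1 z"
  unfolding pd_def by (rule has_derivative_eq_rhs[OF has_derivative_snd[OF has_derivative_ident]]) auto

lemma pd_const: "pd (\<lambda>_. c) 0 0 z"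
  unfolding pd_def by (rule has_derivative_eq_rhs[OF has_derivative_const]) auto

lemma pd_comp: assumes f: "pd f a b z" and g: "(g has_real_derivative d) (at (f z))"
  shows "pd (\<lambda>z. g (f z)) (d * a) (d * b) z"
  unfolding pd_def
  using has_derivative_compose[OF f[unfolded pd_def] g[unfolded has_field_derivative_def]]
  by (rule has_derivative_eq_rhs) (auto simp: algebra_simps)

lemma pd_add: assumes f: "pd f a b z" and g: "pd g c d z" shows "pd (\<lambda>z. f z + g z) (a + c) (b + d) z"
  unfolding pd_def
  using has_derivative_add[OF f[unfolded pd_def] g[unfolded pd_def]]
  by (rule has_derivative_eq_rhs) (auto simp: algebra_simps)

lemma pd_mult: assumes f: "pd f a b z" and g: "pd g c d z" shows
   "pd (\<lambda>z. f z * g z) (a * g z + f z * c) (b * g z + f z * d) z"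
  unfolding pd_def
  using has_derivative_mult[OF f[unfolded pd_def] g[unfolded pd_def]]
  by (rule has_derivative_eq_rhs) (auto simp: algebra_simps)

lemma pd_powr: "pd f a b z \<Longrightarrow> f z > 0 \<Longrightarrow>
   pd (\<lambda>z. f z powr c) (c * f z powr (c - 1) * a) (c * f z powr (c - 1) * b) z"
  by (rule pd_comp[of f a b z "\<lambda>x. x powr c"]) (auto intro: has_real_derivative_powr)

lemma pd_partial_r: "pd f a b (t, r) \<Longrightarrow> ((\<lambda>r. f (t, r)) has_real_derivative b) (at r)"
  unfolding pd_def has_field_derivative_def
  by (rule has_derivative_eq_rhs[OF has_derivative_compose[of "\<lambda>r. (t, r)" "\<lambda>h. (0, h)"]])
     (auto intro!: derivative_eq_intros)

context msetup begin

lemma interior_at: "x > 0 \<Longrightarrow> at x within {0..} = at (x::real)"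
  by (rule at_within_interior) simp

lemma der_at: "x > 0 \<Longrightarrow> (u0 has_real_derivative u0' x) (at x)"
  using der[of x] interior_at[of x] by simp
lemma m0_der_at: "x > 0 \<Longrightarrow> (m0 has_real_derivative u0 x) (at x)"
  using m0_deriv[of x] interior_at[of x] by simp
lemma phi_der_at: "x > 0 \<Longrightarrow> (phi has_real_derivative phi' x) (at x)"
  using phi_deriv[of x] interior_at[of x] by simp
lemma psi_der_at: "x > 0 \<Longrightarrow> (psi has_real_derivative psi' x) (at x)"
  using psi_deriv[of x] interior_at[of x] by simp

definition "Dz z = 1 + fst z * phi' (Q z)"
definition "aQ z = - phi (Q z) / Dz z"
definition "bQ z = 1 / Dz z"

lemma Dz_ge: "fst z \<ge> 0 \<Longrightarrow> snd z \<ge> 0 \<Longrightarrow> Dz z \<ge> 1"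
  unfolding Dz_def using phi'_nonneg[OF Q_props(1)[of "fst z" "snd z"]] by simp

lemma Q_pd: assumes t: "t > 0" and r: "r > 0" shows "pd Q (aQ (t, r)) (bQ (t, r)) (t, r)"
proof -
  define x where "x = Q (t, r)"
  have x: "x > 0" using Q_pos[of t r] t r by (simp add: x_def)
  define D where "D = 1 + t * phi' x"
  have D: "D \<ge> 1" using phi'_nonneg[of x] x t by (simp add: D_def)
  define F where "F = (\<lambda>w::real\<times>real. (fst w, snd w + fst w * phi (snd w)))"
  define F' where "F' = (\<lambda>w::real\<times>real. (fst w, snd w + (fst w * phi x + t * (phi' x * snd w))))"
  define g where "g = (\<lambda>w::real\<times>real. (fst w, Q w))"
  define g' where "g' = (\<lambda>w::real\<times>real. (fst w, (snd w - fst w * phi x) / D))"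
  have dphi: "((\<lambda>w::real\<times>real. phi (snd w)) has_derivative (\<lambda>w. phi' x * snd w)) (at (t, x))"
  proof -
    have s: "(snd has_derivative snd) (at (t, x))"
      using has_derivative_snd[OF has_derivative_ident, of "at (t, x)"] by simp
    show ?thesis
      using has_derivative_compose[OF s, of phi "(*) (phi' x)"] phi_der_at[OF x]
      by (simp add: has_field_derivative_def)
  qed
  have s: "(snd has_derivative snd) (at (t, x))"
    using has_derivative_snd[OF has_derivative_ident, of "at (t, x)"] by simp
  have f1: "(fst has_derivative fst) (at (t, x))"
    using has_derivative_fst[OF has_derivative_ident, of "at (t, x)"] by simp
  have "(F has_derivative F') (at (t, x))"
    unfolding F_def F'_def
    using has_derivative_Pair[OF f1 has_derivative_add[OF s has_derivative_mult[OF f1 dphi]]]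
    by (rule has_derivative_eq_rhs) (auto simp: algebra_simps fun_eq_iff)
  then have dF: "(F has_derivative F') (at (g (t, r)))"
    by (simp add: g_def x_def)
  have lin: "bounded_linear g'"
  proof -
    have "linear g'" unfolding g'_def
      by (rule linearI) (auto simp: algebra_simps add_divide_distrib diff_divide_distrib)
    then show ?thesis by (rule linear_conv_bounded_linear[THEN iffD1])
  qed
  have comp: "g' \<circ> F' = id"
    using D by (auto simp: g'_def F'_def D_def fun_eq_iff field_simps)
  have cg: "continuous (at (t, r)) g"
  proof -
    have "continuous_on ({0<..} \<times> {0<..}) Q"
      by (rule continuous_on_subset[OF Q_cont]) auto
    hence "continuous (at (t, r)) Q"
      using t r by (subst (asm) continuous_on_eq_continuous_at) (auto intro!: open_Times)
    then show ?thesis unfolding g_def by (intro continuous_intros)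
  qed
  have "(g has_derivative g') (at (t, r))"
  proof (rule has_derivative_inverse_basic[OF dF lin comp cg])
    show "open ({0::real<..} \<times> {0::real<..})" by (intro open_Times open_greaterThan)
    show "(t, r) \<in> {0<..} \<times> {0<..}" using t r by auto
    fix z :: "real \<times> real" assume "z \<in> {0<..} \<times> {0<..}"
    then show "F (g z) = z"
      using Q_props(2)[of "fst z" "snd z"] by (auto simp: F_def g_def Pmap_eq)
  qed
  hence "((\<lambda>w. snd (g w)) has_derivative (\<lambda>w. snd (g' w))) (at (t, r))"
    by (rule has_derivative_snd)
  hence "(Q has_derivative (\<lambda>w. snd (g' w))) (at (t, r))" by (simp add: g_def)
  moreover have "(\<lambda>w. snd (g' w)) = (\<lambda>w. fst w * aQ (t, r) + snd w * bQ (t, r))"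
  proof -
    have e: "Dz (t, r) = D" by (simp add: Dz_def D_def x_def)
    have "aQ (t, r) = - phi x / D" "bQ (t, r) = 1 / D" by (simp_all add: aQ_def bQ_def e x_def)
    then show ?thesis by (simp add: g'_def fun_eq_iff diff_divide_distrib)
  qed
  ultimately show ?thesis unfolding pd_def by simp
qed

end


context msetup begin

definition "W z = 1 + \<alpha> * fst z * psi (Q z)"
definition "Usol z = u0 (Q z) * W z powr (-1/\<alpha>)"
definition "Mz z = m0 (Q z) * W z powr ((\<alpha> - 1)/\<alpha>)"
definition "Wt z = \<alpha> * (psi (Q z) + fst z * (psi' (Q z) * aQ z))"
definition "Wr z = \<alpha> * (fst z * (psi' (Q z) * bQ z))"
definition "Ut z = u0' (Q z) * aQ z * W z powr (-1/\<alpha>) + u0 (Q z) * ((-1/\<alpha>) * W z powr (-1/\<alpha> - 1) * Wt z)"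
definition "Ur z = u0' (Q z) * bQ z * W z powr (-1/\<alpha>) + u0 (Q z) * ((-1/\<alpha>) * W z powr (-1/\<alpha> - 1) * Wr z)"
definition "Mt z = u0 (Q z) * aQ z * W z powr ((\<alpha> - 1)/\<alpha>) + m0 (Q z) * (((\<alpha> - 1)/\<alpha>) * W z powr ((\<alpha> - 1)/\<alpha> - 1) * Wt z)"
definition "Mr z = u0 (Q z) * bQ z * W z powr ((\<alpha> - 1)/\<alpha>) + m0 (Q z) * (((\<alpha> - 1)/\<alpha>) * W z powr ((\<alpha> - 1)/\<alpha> - 1) * Wr z)"

lemma W_ge: "fst z \<ge> 0 \<Longrightarrow> W z \<ge> 1"
  unfolding W_def using alpha psi_nonneg[of "Q z"] by simp

lemma W_pd: assumes "t > 0" "r > 0" shows "pd W (Wt (t, r)) (Wr (t, r)) (t, r)"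
proof -
  have q: "Q (t, r) > 0" using Q_pos assms by simp
  have a: "pd (\<lambda>z. \<alpha> * fst z) (0 * fst (t, r) + \<alpha> * 1) (0 * fst (t, r) + \<alpha> * 0) (t, r)"
    by (rule pd_mult[OF pd_const pd_fst])
  have b: "pd (\<lambda>z. psi (Q z)) (psi' (Q (t, r)) * aQ (t, r)) (psi' (Q (t, r)) * bQ (t, r)) (t, r)"
    by (rule pd_comp[OF Q_pd[OF assms] psi_der_at[OF q]])
  have "pd (\<lambda>z. 1 + \<alpha> * fst z * psi (Q z)) (0 + ((0 * fst (t, r) + \<alpha> * 1) * psi (Q (t, r)) + \<alpha> * fst (t, r) * (psi' (Q (t, r)) * aQ (t, r))))
     (0 + ((0 * fst (t, r) + \<alpha> * 0) * psi (Q (t, r)) + \<alpha> * fst (t, r) * (psi' (Q (t, r)) * bQ (t, r)))) (t, r)"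
    by (rule pd_add[OF pd_const pd_mult[OF a b]])
  then show ?thesis unfolding W_def[abs_def]
    by (rule pd_cong) (simp_all add: Wt_def Wr_def algebra_simps)
qed

lemma U_pd: assumes "t > 0" "r > 0" shows "pd Usol (Ut (t, r)) (Ur (t, r)) (t, r)"
proof -
  have q: "Q (t, r) > 0" using Q_pos assms by simp
  have w: "W (t, r) > 0" using W_ge[of "(t, r)"] assms by simp
  have a: "pd (\<lambda>z. u0 (Q z)) (u0' (Q (t, r)) * aQ (t, r)) (u0' (Q (t, r)) * bQ (t, r)) (t, r)"
    by (rule pd_comp[OF Q_pd[OF assms] der_at[OF q]])
  have b: "pd (\<lambda>z. W z powr (-1/\<alpha>)) ((-1/\<alpha>) * W (t, r) powr (-1/\<alpha> - 1) * Wt (t, r)) ((-1/\<alpha>) * W (t, r) powr (-1/\<alpha> - 1) * Wr (t, r)) (t, r)"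
    by (rule pd_powr[OF W_pd[OF assms] w])
  show ?thesis unfolding Usol_def[abs_def]
    by (rule pd_cong[OF pd_mult[OF a b]]) (simp_all add: Ut_def Ur_def)
qed

lemma M_pd: assumes "t > 0" "r > 0" shows "pd Mz (Mt (t, r)) (Mr (t, r)) (t, r)"
proof -
  have q: "Q (t, r) > 0" using Q_pos assms by simp
  have w: "W (t, r) > 0" using W_ge[of "(t, r)"] assms by simp
  have a: "pd (\<lambda>z. m0 (Q z)) (u0 (Q (t, r)) * aQ (t, r)) (u0 (Q (t, r)) * bQ (t, r)) (t, r)"
    by (rule pd_comp[OF Q_pd[OF assms] m0_der_at[OF q]])
  have b: "pd (\<lambda>z. W z powr ((\<alpha> - 1)/\<alpha>)) (((\<alpha> - 1)/\<alpha>) * W (t, r) powr ((\<alpha> - 1)/\<alpha> - 1) * Wt (t, r)) (((\<alpha> - 1)/\<alpha>) * W (t, r) powr ((\<alpha> - 1)/\<alpha> - 1) * Wr (t, r)) (t, r)"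
    by (rule pd_powr[OF W_pd[OF assms] w])
  show ?thesis unfolding Mz_def[abs_def]
    by (rule pd_cong[OF pd_mult[OF a b]]) (simp_all add: Mt_def Mr_def)
qed

end


context msetup begin

abbreviation "SS \<equiv> {0::real..} \<times> {0::real..}"

lemma Q_into: "z \<in> SS \<Longrightarrow> Q z \<ge> 0"
  using Q_props(1)[of "fst z" "snd z"] by auto

lemma compQ: "continuous_on {0..} f \<Longrightarrow> continuous_on SS (\<lambda>z. f (Q z))"
  by (rule continuous_on_compose2[OF _ Q_cont]) (auto intro: Q_into)

lemmas cQs = compQ[OF u0_cont] compQ[OF cont'] compQ[OF m0_cont] compQ[OF phi_cont]
  compQ[OF phi'_cont] compQ[OF psi_cont] compQ[OF psi'_cont]

lemma Dz_cont: "continuous_on SS Dz"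
  unfolding Dz_def[abs_def]
  by (intro continuous_on_add continuous_on_mult continuous_on_const continuous_on_fst continuous_on_id cQs)

lemma Dz_nz: "z \<in> SS \<Longrightarrow> Dz z \<noteq> 0"
  using Dz_ge[of z] by auto

lemma aQ_cont: "continuous_on SS aQ"
  unfolding aQ_def[abs_def]
  by (intro continuous_on_divide continuous_on_minus Dz_cont cQs) (use Dz_nz in force)

lemma bQ_cont: "continuous_on SS bQ"
  unfolding bQ_def[abs_def]
  by (intro continuous_on_divide continuous_on_const Dz_cont) (use Dz_nz in force)

lemma W_cont: "continuous_on SS W"
  unfolding W_def[abs_def]
  by (intro continuous_on_add continuous_on_mult continuous_on_const continuous_on_fst continuous_on_id cQs)

lemma Wp_cont: "continuous_on SS (\<lambda>z. W z powr c)"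
proof (rule continuous_on_powr'[OF W_cont continuous_on_const])
  show "\<forall>z\<in>SS. 0 \<le> W z \<and> (W z = 0 \<longrightarrow> 0 < c)"
  proof
    fix z assume "z \<in> SS" then have "W z \<ge> 1" using W_ge[of z] by auto
    then show "0 \<le> W z \<and> (W z = 0 \<longrightarrow> 0 < c)" by simp
  qed
qed

lemma Wt_cont: "continuous_on SS Wt"
  unfolding Wt_def[abs_def]
  by (intro continuous_on_add continuous_on_mult continuous_on_const continuous_on_fst continuous_on_id cQs aQ_cont)

lemma Wr_cont: "continuous_on SS Wr"
  unfolding Wr_def[abs_def]
  by (intro continuous_on_add continuous_on_mult continuous_on_const continuous_on_fst continuous_on_id cQs bQ_cont)

lemma Ut_cont: "continuous_on SS Ut"
  unfolding Ut_def[abs_def]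
  by (intro continuous_on_add continuous_on_mult continuous_on_const cQs aQ_cont Wp_cont Wt_cont)

lemma Ur_cont: "continuous_on SS Ur"
  unfolding Ur_def[abs_def]
  by (intro continuous_on_add continuous_on_mult continuous_on_const cQs bQ_cont Wp_cont Wr_cont)

lemma Mt_cont: "continuous_on SS Mt"
  unfolding Mt_def[abs_def]
  by (intro continuous_on_add continuous_on_mult continuous_on_const cQs aQ_cont Wp_cont Wt_cont)

lemma Mr_cont: "continuous_on SS Mr"
  unfolding Mr_def[abs_def]
  by (intro continuous_on_add continuous_on_mult continuous_on_const cQs bQ_cont Wp_cont Wr_cont)

lemma Usol_cont: "continuous_on SS Usol"
  unfolding Usol_def[abs_def]
  by (intro continuous_on_mult cQs Wp_cont)

lemma Mz_cont: "continuous_on SS Mz"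
  unfolding Mz_def[abs_def]
  by (intro continuous_on_mult cQs Wp_cont)

end


lemma alg_r:
  fixes a t m s s1 s2 s' D w v P :: real
  assumes "a \<noteq> 0" "D = 1 + t * (a * (P + (a - 1) * m * s2 * s'))" "s * s2 = s1" "D \<noteq> 0"
    "w = 1 + a * t * P"
  shows "s * (1 / D) * (w * v) + m * ((a - 1) / a * v * (a * (t * (a * s1 * s' * (1 / D))))) = s * v"
proof -
  define e where "e = 1 / D"
  have e: "D * e = 1" using assms by (simp add: e_def)
  have "s * e * (w * v) + m * ((a - 1) * v * (t * (a * s1 * s' * e))) = s * v"
    using e assms(2,3,5) by algebra
  then show ?thesis using assms(1) by (simp add: e_def)
qed

lemma alg_t:
  fixes a t m s s1 s2 s' D w v P :: real
  assumes "a \<noteq> 0" "D = 1 + t * (a * (P + (a - 1) * m * s2 * s'))" "s * s2 = s1" "D \<noteq> 0"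
    "w = 1 + a * t * P" "s * s1 = P" "w \<noteq> 0"
  shows "s * (- (a * m * s1) / D) * (w * v) + m * ((a - 1) / a * v * (a * (P + t * (a * s1 * s' * (- (a * m * s1) / D)))))
     = - (m * (w * v) * (P / w))"
proof -
  define e where "e = 1 / D"
  have e: "D * e = 1" using assms by (simp add: e_def)
  have "s * (- (a * m * s1) * e) * (w * v) + m * ((a - 1) * v * ((P + t * (a * s1 * s' * (- (a * m * s1) * e)))))
     = - (m * v * P)"
    using e assms(2,3,5,6) by algebra
  then show ?thesis using assms(1,7) by (simp add: e_def)
qed



context msetup begin

lemma f1: "w > 0 \<Longrightarrow> w powr ((\<alpha> - 1) / \<alpha>) = w * w powr (-1/\<alpha>)"
proof -
  assume w: "w > 0"
  have "(\<alpha> - 1) / \<alpha> = 1 + -1/\<alpha>" using alpha by (simp add: field_simps)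
  moreover have "w powr (1 + -1/\<alpha>) = w powr 1 * w powr (-1/\<alpha>)" by (rule powr_add)
  ultimately show ?thesis using w by (simp only:) simp
qed

lemma f2: "w powr ((\<alpha> - 1) / \<alpha> - 1) = w powr (-1/\<alpha>)"
proof -
  have "(\<alpha> - 1) / \<alpha> - 1 = -1/\<alpha>" using alpha by (simp add: field_simps)
  then show ?thesis by simp
qed

lemma f3: "s \<ge> 0 \<Longrightarrow> w > 0 \<Longrightarrow> (s * w powr (-1/\<alpha>)) powr \<alpha> = s powr \<alpha> / w"
proof -
  assume s: "s \<ge> 0" and w: "w > 0"
  have "(s * w powr (-1/\<alpha>)) powr \<alpha> = s powr \<alpha> * (w powr (-1/\<alpha>)) powr \<alpha>"
    using s by (simp add: powr_mult)
  also have "(w powr (-1/\<alpha>)) powr \<alpha> = w powr (-1)"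
    using alpha by (simp add: powr_powr)
  also have "w powr (-1) = 1 / w" using w by (simp add: powr_minus divide_inverse)
  finally show ?thesis by simp
qed

lemma Mr_eq: assumes "fst z \<ge> 0" "snd z \<ge> 0" shows "Mr z = Usol z"
proof -
  have w: "W z > 0" using W_ge[of z] assms by simp
  have D: "Dz z \<noteq> 0" using Dz_ge[of z] assms by simp
  have q: "Q z \<ge> 0" using Q_into[of z] assms by (cases z) auto
  show ?thesis
    unfolding Mr_def Usol_def bQ_def Wr_def psi'_def f1[OF w] f2
  proof (rule alg_r)
    show "\<alpha> \<noteq> 0" using alpha by simp
    show "Dz z = 1 + fst z * (\<alpha> * (u0 (Q z) powr \<alpha> + (\<alpha> - 1) * m0 (Q z) * u0 (Q z) powr (\<alpha> - 2) * u0' (Q z)))"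
      by (simp add: Dz_def phi'_def)
    show "u0 (Q z) * u0 (Q z) powr (\<alpha> - 2) = u0 (Q z) powr (\<alpha> - 1)"
      using powr_mult_self[OF nonneg[OF q], of "\<alpha> - 2"] by simp
    show "Dz z \<noteq> 0" by (rule D)
    show "W z = 1 + \<alpha> * fst z * u0 (Q z) powr \<alpha>" by (simp add: W_def psi_def)
  qed
qed

lemma Mt_eq: assumes "fst z \<ge> 0" "snd z \<ge> 0" shows "Mt z = - (Mz z * Usol z powr \<alpha>)"
proof -
  have w: "W z > 0" using W_ge[of z] assms by simp
  have D: "Dz z \<noteq> 0" using Dz_ge[of z] assms by simp
  have q: "Q z \<ge> 0" using Q_into[of z] assms by (cases z) auto
  have u: "Usol z powr \<alpha> = psi (Q z) / W z"
    unfolding Usol_def psi_def by (rule f3[OF nonneg[OF q] w])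
  show ?thesis
    unfolding Mt_def Mz_def u aQ_def Wt_def psi'_def phi_def f1[OF w] f2
  proof (rule alg_t)
    show "\<alpha> \<noteq> 0" using alpha by simp
    show "Dz z = 1 + fst z * (\<alpha> * (psi (Q z) + (\<alpha> - 1) * m0 (Q z) * u0 (Q z) powr (\<alpha> - 2) * u0' (Q z)))"
      by (simp add: Dz_def phi'_def psi_def)
    show "u0 (Q z) * u0 (Q z) powr (\<alpha> - 2) = u0 (Q z) powr (\<alpha> - 1)"
      using powr_mult_self[OF nonneg[OF q], of "\<alpha> - 2"] by simp
    show "Dz z \<noteq> 0" by (rule D)
    show "W z = 1 + \<alpha> * fst z * psi (Q z)" by (simp add: W_def)
    show "u0 (Q z) * u0 (Q z) powr (\<alpha> - 1) = psi (Q z)"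
      using powr_mult_self[OF nonneg[OF q], of "\<alpha> - 1"] by (simp add: psi_def)
    show "W z \<noteq> 0" using w by simp
  qed
qed

end


lemma pd_to: "pd f a b z \<Longrightarrow> (f has_derivative (\<lambda>(h, k). h * a + k * b)) (at z)"
proof -
  assume "pd f a b z"
  moreover have "(\<lambda>(h, k). h * a + k * b) = (\<lambda>w. fst w * a + snd w * b)" by auto
  ultimately show ?thesis unfolding pd_def by simp
qed

lemma powr_identity:
  fixes r t a :: real
  assumes r: "r > 0" and t: "t \<ge> 0" and a: "a > 0"
  shows "(r powr (- a) + a * t) powr (- 1 / a) = r * (1 + a * t * r powr a) powr (-1/a)"
proof -
  have e: "r powr (- a) * r powr a = 1" using r by (simp add: powr_add[symmetric])
  have "r powr (- a) + a * t = r powr (- a) * (1 + a * t * r powr a)"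
    using e by (simp add: algebra_simps)
  hence "(r powr (- a) + a * t) powr (- 1 / a) = (r powr (- a)) powr (-1/a) * (1 + a * t * r powr a) powr (-1/a)"
    using r t a by (simp add: powr_mult)
  also have "(r powr (- a)) powr (-1/a) = r" using a r by (simp add: powr_powr)
  finally show ?thesis .
qed

context msetup begin

lemma usol_eq: assumes "t \<ge> 0" "\<rho> \<ge> 0" shows "usol \<alpha> u0 t \<rho> = Usol (t, \<rho>)"
proof -
  have q: "Q (t, \<rho>) \<ge> 0" using Q_props(1)[OF assms] .
  have e: "the_inv_into {0..} (Pmap \<alpha> u0 t) \<rho> = Q (t, \<rho>)" by (simp add: Q_def)
  show ?thesis
  proof (cases "u0 (Q (t, \<rho>)) = 0")
    case True then show ?thesis by (simp add: usol_def e Usol_def)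
  next
    case False
    hence r: "u0 (Q (t, \<rho>)) > 0" using nonneg[OF q] by simp
    show ?thesis using False powr_identity[OF r assms(1), of \<alpha>] alpha
      by (simp add: usol_def e Usol_def W_def psi_def Let_def)
  qed
qed

lemma Mz_r0: "t \<ge> 0 \<Longrightarrow> Mz (t, 0) = 0"
  by (simp add: Mz_def Q_r0 m0_0)

lemma msol_eq: assumes t: "t > 0" and r: "\<rho> \<ge> 0" shows "msol \<alpha> u0 (t, \<rho>) = Mz (t, \<rho>)"
proof -
  have c: "continuous_on {0..\<rho>} (\<lambda>\<sigma>. Mz (t, \<sigma>))"
    by (rule continuous_on_compose2[OF Mz_cont]) (use t in \<open>auto intro!: continuous_intros\<close>)
  have "((\<lambda>\<sigma>. usol \<alpha> u0 t \<sigma>) has_integral (Mz (t, \<rho>) - Mz (t, 0))) {0..\<rho>}"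
  proof (rule fundamental_theorem_of_calculus_interior[OF r c])
    fix \<sigma> assume s: "\<sigma> \<in> {0<..<\<rho>}"
    have "((\<lambda>\<sigma>. Mz (t, \<sigma>)) has_real_derivative Mr (t, \<sigma>)) (at \<sigma>)"
      by (rule pd_partial_r[OF M_pd]) (use t s in auto)
    moreover have "Mr (t, \<sigma>) = usol \<alpha> u0 t \<sigma>"
      using Mr_eq[of "(t, \<sigma>)"] usol_eq[of t \<sigma>] t s by simp
    ultimately show "((\<lambda>\<sigma>. Mz (t, \<sigma>)) has_vector_derivative usol \<alpha> u0 t \<sigma>) (at \<sigma>)"
      by (simp add: has_real_derivative_iff_has_vector_derivative)
  qed
  then show ?thesis using Mz_r0[of t] t
    by (simp add: msol_def integral_unique)
qed

lemma main:
  shows "(\<forall>t\<ge>0.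
           bij_betw (Pmap \<alpha> u0 t) {0..} {0..} \<and>
           (\<forall>\<rho>0\<ge>0. \<exists>D. (Pmap \<alpha> u0 t has_real_derivative D) (at \<rho>0 within {0..}) \<and> D \<ge> 1)) \<and>
         continuous_on ({0..} \<times> {0..}) (\<lambda>(t, \<rho>). usol \<alpha> u0 t \<rho>) \<and>
         C1_on ({0<..} \<times> {0<..}) (\<lambda>(t, \<rho>). usol \<alpha> u0 t \<rho>) \<and>
         classical_mass_solution \<alpha> ({0<..} \<times> {0<..}) (msol \<alpha> u0) \<and>
         (\<forall>\<rho>\<ge>0. msol \<alpha> u0 (0, \<rho>) = mass0 u0 \<rho>) \<and>
         (\<forall>t\<ge>0. msol \<alpha> u0 (t, 0) = 0)"
proof (intro conjI allI impI)
  let ?U = "{0::real<..} \<times> {0::real<..}"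
  have openU: "open ?U" by (intro open_Times open_greaterThan)
  have subU: "?U \<subseteq> SS" by auto
  fix t :: real assume t: "t \<ge> 0"
  show "bij_betw (Pmap \<alpha> u0 t) {0..} {0..}" by (rule Pmap_bij[OF t])
next
  fix t \<rho>0 :: real assume t: "t \<ge> 0" and r: "\<rho>0 \<ge> 0"
  show "\<exists>D. (Pmap \<alpha> u0 t has_real_derivative D) (at \<rho>0 within {0..}) \<and> D \<ge> 1"
    using Pmap_deriv[OF t r] phi'_nonneg[OF r] t by (intro exI[of _ "1 + t * phi' \<rho>0"]) simp
next
  let ?U = "{0::real<..} \<times> {0::real<..}"
  show "continuous_on ({0..} \<times> {0..}) (\<lambda>(t, \<rho>). usol \<alpha> u0 t \<rho>)"
    by (rule continuous_on_cong[THEN iffD1, OF refl _ Usol_cont]) (auto simp: usol_eq)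
next
  let ?U = "{0::real<..} \<times> {0::real<..}"
  have openU: "open ?U" by (intro open_Times open_greaterThan)
  have subU: "?U \<subseteq> SS" by auto
  show "C1_on ?U (\<lambda>(t, \<rho>). usol \<alpha> u0 t \<rho>)"
    unfolding C1_on_def
  proof (intro exI conjI ballI)
    show "continuous_on ?U Ut" by (rule continuous_on_subset[OF Ut_cont subU])
    show "continuous_on ?U Ur" by (rule continuous_on_subset[OF Ur_cont subU])
    fix z assume z: "z \<in> ?U"
    obtain t r where tr: "z = (t, r)" "t > 0" "r > 0" using z by auto
    have "(Usol has_derivative (\<lambda>(h, k). h * Ut z + k * Ur z)) (at z)"
      using pd_to[OF U_pd[OF tr(2,3)]] tr(1) by simp
    hence "((\<lambda>(t, \<rho>). usol \<alpha> u0 t \<rho>) has_derivative (\<lambda>(h, k). h * Ut z + k * Ur z)) (at z)"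
      by (rule has_derivative_transform_within_open[OF _ openU z]) (auto simp: usol_eq)
    then show "((\<lambda>(t, \<rho>). usol \<alpha> u0 t \<rho>) has_derivative (\<lambda>(h, k). h * Ut z + k * Ur z)) (at z within ?U)"
      by (rule has_derivative_at_withinI)
  qed
next
  let ?U = "{0::real<..} \<times> {0::real<..}"
  have openU: "open ?U" by (intro open_Times open_greaterThan)
  have subU: "?U \<subseteq> SS" by auto
  show "classical_mass_solution \<alpha> ?U (msol \<alpha> u0)"
    unfolding classical_mass_solution_def
  proof (intro exI conjI ballI)
    show "continuous_on ?U Mt" by (rule continuous_on_subset[OF Mt_cont subU])
    show "continuous_on ?U Mr" by (rule continuous_on_subset[OF Mr_cont subU])
    fix z assume z: "z \<in> ?U"
    obtain t r where tr: "z = (t, r)" "t > 0" "r > 0" using z by auto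
    have "(Mz has_derivative (\<lambda>(h, k). h * Mt z + k * Mr z)) (at z)"
      using pd_to[OF M_pd[OF tr(2,3)]] tr(1) by simp
    then show "(msol \<alpha> u0 has_derivative (\<lambda>(h, k). h * Mt z + k * Mr z)) (at z)"
      by (rule has_derivative_transform_within_open[OF _ openU z]) (auto simp: msol_eq)
    have "msol \<alpha> u0 z = Mz z" using msol_eq[of t r] tr by simp
    then show "Mt z + msol \<alpha> u0 z * Mr z powr \<alpha> = 0"
      using Mt_eq[of z] Mr_eq[of z] tr by simp
  qed
next
  fix \<rho> :: real assume r: "\<rho> \<ge> 0"
  have "integral {0..\<rho>} (usol \<alpha> u0 0) = integral {0..\<rho>} u0"
  proof (rule integral_cong)
    fix \<sigma> assume "\<sigma> \<in> {0..\<rho>}"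
    then show "usol \<alpha> u0 0 \<sigma> = u0 \<sigma>" using usol_eq[of 0 \<sigma>] Q_t0[of \<sigma>]
      by (simp add: Usol_def W_def)
  qed
  then show "msol \<alpha> u0 (0, \<rho>) = mass0 u0 \<rho>" by (simp add: msol_def mass0_def)
next
  fix t :: real assume "t \<ge> 0"
  show "msol \<alpha> u0 (t, 0) = 0" by (simp add: msol_def)
qed

end



theorem mainTheorem1:
  fixes \<alpha> :: real and u0 :: "real \<Rightarrow> real"
  assumes alpha: "\<alpha> > 1"
    and u0_C1: "\<exists>u0'. continuous_on {0..} u0' \<and>
                  (\<forall>x\<ge>0. (u0 has_real_derivative u0' x) (at x within {0..}))"
    and u0_nonneg: "\<forall>x\<ge>0. u0 x \<ge> 0"
    and u0_mono: "mono_on {0..} u0"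
  shows "(\<forall>t\<ge>0.
           bij_betw (Pmap \<alpha> u0 t) {0..} {0..} \<and>
           (\<forall>\<rho>0\<ge>0. \<exists>D. (Pmap \<alpha> u0 t has_real_derivative D) (at \<rho>0 within {0..}) \<and> D \<ge> 1)) \<and>
         continuous_on ({0..} \<times> {0..}) (\<lambda>(t, \<rho>). usol \<alpha> u0 t \<rho>) \<and>
         C1_on ({0<..} \<times> {0<..}) (\<lambda>(t, \<rho>). usol \<alpha> u0 t \<rho>) \<and>
         classical_mass_solution \<alpha> ({0<..} \<times> {0<..}) (msol \<alpha> u0) \<and>
         (\<forall>\<rho>\<ge>0. msol \<alpha> u0 (0, \<rho>) = mass0 u0 \<rho>) \<and>
         (\<forall>t\<ge>0. msol \<alpha> u0 (t, 0) = 0)"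
proof -
  obtain u0' where c: "continuous_on {0..} u0'"
    and d: "\<forall>x\<ge>0. (u0 has_real_derivative u0' x) (at x within {0..})"
    using u0_C1 by blast
  interpret msetup \<alpha> u0 u0'
    using alpha c d u0_nonneg u0_mono by unfold_locales auto
  show ?thesis by (rule main)
qed

end
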